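(* Let $(X,d)$ be a compact metric space and $f\colon X\to X$ continuous. If $f$ has the limit shadowing property around $CR(f)$, then $f$ has the limit shadowing property.
   Context: A limit pseudo orbit is a sequence $(x_i)_{i\ge0}$ with $\lim_i d(f(x_i),x_{i+1})=0$. $f$ has the limit shadowing property around $S\subset X$ if every limit pseudo orbit contained in $S$ admits $y\in X$ with $\lim_i d(x_i,f^i(y))=0$; $f$ has the limit shadowing property if this holds with $S=X$. $CR(f)$ is the set of chain recurrent points: $x$ such that for every $\delta>0$ there is a finite sequence $x=z_0,\dots,z_k=x$ ($k\ge1$) with $d(f(z_i),z_{i+1})\le\delta$ for $0\le i<k$. *)

theory Defs
  imports "HOL-Analysis.Analysis"
begin

definition limit_pseudo_orbit :: "('a::metric_space \<Rightarrow> 'a) \<Rightarrow> (nat \<Rightarrow> 'a) \<Rightarrow> bool" where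
  "limit_pseudo_orbit f x \<longleftrightarrow> (\<lambda>i. dist (f (x i)) (x (Suc i))) \<longlonglongrightarrow> 0"

definition limit_shadowing_around :: "'a::metric_space set \<Rightarrow> ('a \<Rightarrow> 'a) \<Rightarrow> 'a set \<Rightarrow> bool" where
  "limit_shadowing_around X f S \<longleftrightarrow>
     (\<forall>x. (\<forall>i. x i \<in> S) \<and> limit_pseudo_orbit f x \<longrightarrow>
        (\<exists>y\<in>X. (\<lambda>i. dist (x i) ((f ^^ i) y)) \<longlonglongrightarrow> 0))"

definition limit_shadowing :: "'a::metric_space set \<Rightarrow> ('a \<Rightarrow> 'a) \<Rightarrow> bool" where
  "limit_shadowing X f \<longleftrightarrow> limit_shadowing_around X f X"

definition chain_recurrent_set :: "'a::metric_space set \<Rightarrow> ('a \<Rightarrow> 'a) \<Rightarrow> 'a set" where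
  "chain_recurrent_set X f = {x \<in> X. \<forall>\<delta>>0. \<exists>k\<ge>1. \<exists>z::nat \<Rightarrow> 'a.
      z 0 = x \<and> z k = x \<and> (\<forall>i\<le>k. z i \<in> X) \<and>
      (\<forall>i<k. dist (f (z i)) (z (Suc i)) \<le> \<delta>)}"

end

theory Submission
  imports Defs
begin

lemma infdist_lessE:
  fixes A :: "'a::metric_space set"
  assumes "A \<noteq> {}" "infdist x A < t"
  shows "\<exists>a\<in>A. dist x a < t"
proof -
  have "(INF a\<in>A. dist x a) < t" using assms infdist_notempty by metis
  moreover have "bdd_below ((\<lambda>a. dist x a) ` A)" by (rule bdd_belowI[of _ 0]) auto
  ultimately show ?thesis using cINF_less_iff assms(1) by metis
qed

lemma key_CR:
  fixes X :: "'a::metric_space set" and f :: "'a \<Rightarrow> 'a"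
  assumes cX: "compact X" and cf: "continuous_on X f"
    and xX: "\<forall>i. x i \<in> X" and po: "limit_pseudo_orbit f x" and e: "e > 0"
  shows "\<exists>N. \<forall>i\<ge>N. \<exists>z\<in>chain_recurrent_set X f. dist (x i) z < e"
proof (rule ccontr)
  let ?CR = "chain_recurrent_set X f"
  define A where "A = {i. \<not> (\<exists>z\<in>?CR. dist (x i) z < e)}"
  assume "\<not> ?thesis"
  hence infA: "infinite A" unfolding A_def infinite_nat_iff_unbounded_le by auto
  define s0 where "s0 = enumerate A"
  have s0A: "\<And>n. s0 n \<in> A" unfolding s0_def using enumerate_in_set[OF infA] by auto
  have sm0: "strict_mono s0" unfolding s0_def using strict_mono_enumerate[OF infA] .
  have "seq_compact X" using cX compact_imp_seq_compact by auto
  then obtain p r where pX: "p \<in> X" and smr: "strict_mono (r::nat\<Rightarrow>nat)"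
      and lim0: "((x \<circ> s0) \<circ> r) \<longlonglongrightarrow> p"
    using seq_compactE[of X "x \<circ> s0"] xX by auto
  define s where "s = s0 \<circ> r"
  have sm: "strict_mono s" unfolding s_def using sm0 smr strict_mono_o by blast
  have sA: "\<And>k. s k \<in> A" unfolding s_def using s0A by auto
  have lim: "(\<lambda>k. x (s k)) \<longlonglongrightarrow> p" using lim0 unfolding s_def by (simp add: o_def)
  have uc: "uniformly_continuous_on X f" using compact_uniformly_continuous cf cX by blast
  have pCR: "p \<in> ?CR"
    unfolding chain_recurrent_set_def
  proof (intro CollectI conjI allI impI pX)
    fix \<delta> :: real assume dpos: "\<delta> > 0"
    define e3 where "e3 = \<delta> / 3"
    have e3: "e3 > 0" using dpos e3_def by auto
    obtain \<eta> where eta: "\<eta> > 0" and etaP: "\<forall>u\<in>X. \<forall>v\<in>X. dist v u < \<eta> \<longrightarrow> dist (f v) (f u) < e3"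
      using uc e3 unfolding uniformly_continuous_on_def by metis
    obtain N where N: "\<forall>i\<ge>N. dist (f (x i)) (x (Suc i)) < e3"
      using po e3 unfolding limit_pseudo_orbit_def lim_sequentially by fastforce
    obtain K where K: "\<forall>k\<ge>K. dist (x (s k)) p < min \<eta> e3"
      using lim eta e3 unfolding lim_sequentially by (metis min_less_iff_conj)
    define k0 where "k0 = max K N"
    define a where "a = s k0"
    define b where "b = s (Suc k0)"
    have aN: "a \<ge> N" unfolding a_def k0_def using seq_suble[OF sm, of "max K N"] by auto
    have ab: "a < b" unfolding a_def b_def using sm by (simp add: strict_mono_def)
    have da: "dist (x a) p < \<eta>" "dist (x a) p < e3" using K unfolding a_def k0_def by auto
    have db: "dist (x b) p < e3" using K unfolding b_def k0_def by auto
    define m where "m = b - a"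
    have m1: "m \<ge> 1" using ab m_def by auto
    define z where "z = (\<lambda>j. if j = 0 \<or> j = m then p else x (a + j))"
    have fpa: "dist (f p) (f (x a)) < e3" using etaP pX xX da(1) by (metis dist_commute)
    have step: "dist (f (z j)) (z (Suc j)) \<le> \<delta>" if jm: "j < m" for j
    proof (cases "j = 0")
      case True
      note j0 = True
      show ?thesis
      proof (cases "m = 1")
        case True
        have "dist (f p) p \<le> dist (f p) (f (x a)) + dist (f (x a)) (x (Suc a)) + dist (x (Suc a)) p"
          by (metis dist_triangle add.commute add_le_cancel_left dist_triangle_le order.trans)
        moreover have "Suc a = b" using True m_def ab by auto
        ultimately have "dist (f p) p < e3 + e3 + e3" using fpa N aN db by fastforce
        thus ?thesis using j0 True z_def e3_def by auto
      next
        case False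
        have "dist (f p) (x (Suc a)) \<le> dist (f p) (f (x a)) + dist (f (x a)) (x (Suc a))"
          by (rule dist_triangle)
        hence "dist (f p) (x (Suc a)) < e3 + e3" using fpa N aN by fastforce
        thus ?thesis using j0 False z_def e3_def e3 by auto
      qed
    next
      case False
      note jn0 = False
      show ?thesis
      proof (cases "Suc j = m")
        case True
        have "dist (f (x (a+j))) p \<le> dist (f (x (a+j))) (x (Suc (a+j))) + dist (x (Suc (a+j))) p"
          by (rule dist_triangle)
        moreover have "Suc (a+j) = b" using True m_def ab by auto
        moreover have "dist (f (x (a+j))) (x (Suc (a+j))) < e3" using N aN by auto
        ultimately have "dist (f (x (a+j))) p < e3 + e3" using db by simp
        thus ?thesis using jn0 True z_def e3_def e3 jm by auto
      next
        case False
        have "dist (f (x (a+j))) (x (Suc (a+j))) < e3" using N aN by auto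
        thus ?thesis using jn0 False z_def e3_def e3 jm by auto
      qed
    qed
    show "\<exists>k\<ge>1. \<exists>z::nat \<Rightarrow> 'a. z 0 = p \<and> z k = p \<and> (\<forall>i\<le>k. z i \<in> X) \<and>
      (\<forall>i<k. dist (f (z i)) (z (Suc i)) \<le> \<delta>)"
      apply (rule exI[of _ m], intro conjI m1, rule exI[of _ z])
      using step pX xX by (auto simp: z_def)
  qed
  obtain K where "\<forall>k\<ge>K. dist (x (s k)) p < e" using lim e unfolding lim_sequentially by blast
  hence "dist (x (s K)) p < e" by auto
  thus False using sA[of K] pCR unfolding A_def by auto
qed

theorem lemma3p4:
  fixes X :: "'a::metric_space set" and f :: "'a \<Rightarrow> 'a"
  assumes "compact X"
    and "continuous_on X f"
    and "f ` X \<subseteq> X"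
    and "limit_shadowing_around X f (chain_recurrent_set X f)"
  shows "limit_shadowing X f"
  unfolding limit_shadowing_def limit_shadowing_around_def
proof (intro allI impI)
  let ?CR = "chain_recurrent_set X f"
  fix x assume "(\<forall>i. x i \<in> X) \<and> limit_pseudo_orbit f x"
  hence xX: "\<forall>i. x i \<in> X" and po: "limit_pseudo_orbit f x" by auto
  have CRX: "?CR \<subseteq> X" unfolding chain_recurrent_set_def by auto
  obtain N1 where "\<forall>i\<ge>N1. \<exists>z\<in>?CR. dist (x i) z < 1"
    using key_CR[OF assms(1,2) xX po, of 1] by auto
  hence ne: "?CR \<noteq> {}" by blast
  have inf0: "(\<lambda>i. infdist (x i) ?CR) \<longlonglongrightarrow> 0"
    unfolding lim_sequentially
  proof (intro allI impI)
    fix e :: real assume "e > 0"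
    then obtain N where N: "\<forall>i\<ge>N. \<exists>z\<in>?CR. dist (x i) z < e"
      using key_CR[OF assms(1,2) xX po] by blast
    show "\<exists>N. \<forall>n\<ge>N. dist (infdist (x n) ?CR) 0 < e"
    proof (intro exI allI impI)
      fix n assume "n \<ge> N"
      then obtain z where "z \<in> ?CR" "dist (x n) z < e" using N by blast
      thus "dist (infdist (x n) ?CR) 0 < e" using infdist_le[of z ?CR "x n"] infdist_nonneg[of "x n" ?CR]
        by auto
    qed
  qed
  define z where "z = (\<lambda>i. SOME w. w \<in> ?CR \<and> dist (x i) w < infdist (x i) ?CR + inverse (real (Suc i)))"
  have zP: "z i \<in> ?CR \<and> dist (x i) (z i) < infdist (x i) ?CR + inverse (real (Suc i))" for i
  proof -
    have "\<exists>w\<in>?CR. dist (x i) w < infdist (x i) ?CR + inverse (real (Suc i))"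
      by (rule infdist_lessE[OF ne]) simp
    thus ?thesis unfolding z_def by (metis (mono_tags, lifting) someI_ex)
  qed
  have zX: "z i \<in> X" for i using zP CRX by blast
  have dxz: "(\<lambda>i. dist (x i) (z i)) \<longlonglongrightarrow> 0"
  proof (rule real_tendsto_sandwich[of "\<lambda>_. 0" _ _ "\<lambda>i. infdist (x i) ?CR + inverse (real (Suc i))"])
    show "\<forall>\<^sub>F n in sequentially. 0 \<le> dist (x n) (z n)" by simp
    show "\<forall>\<^sub>F n in sequentially. dist (x n) (z n) \<le> infdist (x n) ?CR + inverse (real (Suc n))"
      using zP less_imp_le by (intro always_eventually) blast
    show "(\<lambda>_. 0::real) \<longlonglongrightarrow> 0" by simp
    show "(\<lambda>i. infdist (x i) ?CR + inverse (real (Suc i))) \<longlonglongrightarrow> 0"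
      using tendsto_add_zero[OF inf0 LIMSEQ_inverse_real_of_nat] by simp
  qed
  have uc: "uniformly_continuous_on X f" using compact_uniformly_continuous assms(1,2) by blast
  have fxz: "(\<lambda>i. dist (f (z i)) (f (x i))) \<longlonglongrightarrow> 0"
    unfolding lim_sequentially
  proof (intro allI impI)
    fix e :: real assume "e > 0"
    then obtain \<eta> where eta: "\<eta> > 0" and etaP: "\<forall>u\<in>X. \<forall>v\<in>X. dist v u < \<eta> \<longrightarrow> dist (f v) (f u) < e"
      using uc unfolding uniformly_continuous_on_def by metis
    obtain N where "\<forall>n\<ge>N. dist (dist (x n) (z n)) 0 < \<eta>" using dxz eta unfolding lim_sequentially by blast
    thus "\<exists>N. \<forall>n\<ge>N. dist (dist (f (z n)) (f (x n))) 0 < e"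
      using etaP xX zX by (metis dist_commute dist_real_def diff_zero abs_of_nonneg zero_le_dist)
  qed
  have po0: "(\<lambda>i. dist (f (x i)) (x (Suc i))) \<longlonglongrightarrow> 0" using po unfolding limit_pseudo_orbit_def .
  have dxz1: "(\<lambda>i. dist (x (Suc i)) (z (Suc i))) \<longlonglongrightarrow> 0" using LIMSEQ_Suc[OF dxz] by simp
  have "limit_pseudo_orbit f z"
    unfolding limit_pseudo_orbit_def
  proof (rule real_tendsto_sandwich[of "\<lambda>_. 0" _ _ "\<lambda>i. dist (f (z i)) (f (x i)) + dist (f (x i)) (x (Suc i)) + dist (x (Suc i)) (z (Suc i))"])
    show "\<forall>\<^sub>F n in sequentially. 0 \<le> dist (f (z n)) (z (Suc n))" by simp
    show "\<forall>\<^sub>F n in sequentially. dist (f (z n)) (z (Suc n)) \<le> dist (f (z n)) (f (x n)) + dist (f (x n)) (x (Suc n)) + dist (x (Suc n)) (z (Suc n))"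
      by (intro always_eventually allI) (metis dist_triangle order.trans add_right_mono)
    show "(\<lambda>_. 0::real) \<longlonglongrightarrow> 0" by simp
    show "(\<lambda>i. dist (f (z i)) (f (x i)) + dist (f (x i)) (x (Suc i)) + dist (x (Suc i)) (z (Suc i))) \<longlonglongrightarrow> 0"
      using tendsto_add_zero[OF tendsto_add_zero[OF fxz po0] dxz1] by simp
  qed
  then obtain y where yX: "y \<in> X" and yl: "(\<lambda>i. dist (z i) ((f ^^ i) y)) \<longlonglongrightarrow> 0"
    using assms(4) zP unfolding limit_shadowing_around_def by blast
  have "(\<lambda>i. dist (x i) ((f ^^ i) y)) \<longlonglongrightarrow> 0"
  proof (rule real_tendsto_sandwich[of "\<lambda>_. 0" _ _ "\<lambda>i. dist (x i) (z i) + dist (z i) ((f ^^ i) y)"])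
    show "\<forall>\<^sub>F n in sequentially. 0 \<le> dist (x n) ((f ^^ n) y)" by simp
    show "\<forall>\<^sub>F n in sequentially. dist (x n) ((f ^^ n) y) \<le> dist (x n) (z n) + dist (z n) ((f ^^ n) y)"
      by (intro always_eventually allI dist_triangle)
    show "(\<lambda>_. 0::real) \<longlonglongrightarrow> 0" by simp
    show "(\<lambda>i. dist (x i) (z i) + dist (z i) ((f ^^ i) y)) \<longlonglongrightarrow> 0"
      using tendsto_add_zero[OF dxz yl] by simp
  qed
  thus "\<exists>y\<in>X. (\<lambda>i. dist (x i) ((f ^^ i) y)) \<longlonglongrightarrow> 0" using yX by blast
qed

end
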